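(* Consider the $M_t^{B_t}/G_t/\infty$ queue described in the context, starting empty, and suppose that when a batch arrives at time $s$ its customers bring i.i.d. exponentially distributed amounts of work with rate $\mu_s>0$, independent of everything else. Then for all $t\ge0$ and $\alpha,\beta,\gamma\ge0$, $$\mathbb{E}\big[e^{-\alpha W(t)-\beta Q(t)-\gamma D(t)}\big]=\exp\Big(-\int_0^t\mathcal{E}_s\Big[1-\Big[(1-e^{-\mu_s(t-s)})e^{-\gamma}+\frac{\mu_s}{\mu_s+\alpha}e^{-\beta}e^{-\mu_s(t-s)}\Big]^{B_s}\Big]\lambda(s)\,ds\Big).$$
   Context: Model: batches arrive at the points of a non-homogeneous Poisson process on $[0,\infty)$ with rate function $\lambda$; a batch arriving at time $s$ has random positive-integer size $B_s$ (law depending on $s$), batches being independent of each other and of the arrival process; $\mathcal{E}_s$ denotes expectation over $B_s$. There are infinitely many servers; a customer arriving at time $s$ with work $S$ departs at $s+S$. $Q(t)$: number in system at time $t$; $D(t)$: number of departures in $(0,t]$; $W(t)$: workload at time $t$, the total remaining work $\sum(S-(t-s))^+$ over customers arrived by time $t$. *)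

theory Defs
  imports "HOL-Probability.Probability"
begin

type_synonym point = "real \<times> nat \<times> (nat \<Rightarrow> real)"
  \<comment> \<open>a marked arrival: (arrival time s, batch size b, works w 0, w 1, ...); only w 0..w (b-1) are used\<close>

definition point_space :: "point measure" where
  "point_space = borel \<Otimes>\<^sub>M (count_space UNIV \<Otimes>\<^sub>M (\<Pi>\<^sub>M i\<in>(UNIV::nat set). (borel :: real measure)))"

definition mark_law :: "(real \<Rightarrow> nat pmf) \<Rightarrow> (real \<Rightarrow> real) \<Rightarrow> real \<Rightarrow> (nat \<times> (nat \<Rightarrow> real)) measure" where
  "mark_law B mu s =
     measure_pmf (B s) \<Otimes>\<^sub>M (\<Pi>\<^sub>M i\<in>(UNIV::nat set). density lborel (exponential_density (mu s)))"

definition intensity :: "(real \<Rightarrow> real) \<Rightarrow> (real \<Rightarrow> nat pmf) \<Rightarrow> (real \<Rightarrow> real) \<Rightarrow> point set \<Rightarrow> ennreal" where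
  "intensity lam B mu A =
     (\<integral>\<^sup>+ s. indicator {0..} s * ennreal (lam s) * emeasure (mark_law B mu s) (Pair s -` A) \<partial>lborel)"

text \<open>Poisson random measure (point process with a.s. no multiple points) with intensity nu:
  counts of disjoint measurable sets are independent and Poisson distributed.\<close>
definition poisson_random_measure ::
  "'w measure \<Rightarrow> 'p measure \<Rightarrow> ('p set \<Rightarrow> ennreal) \<Rightarrow> ('w \<Rightarrow> 'p set) \<Rightarrow> bool" where
  "poisson_random_measure M S nu N \<longleftrightarrow>
     (\<forall>\<omega>\<in>space M. N \<omega> \<subseteq> space S) \<and>
     (\<forall>A\<in>sets S. nu A = \<infinity> \<longrightarrow> (AE \<omega> in M. infinite (N \<omega> \<inter> A))) \<and>
     (\<forall>A\<in>sets S. nu A < \<infinity> \<longrightarrow>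
        (\<lambda>\<omega>. card (N \<omega> \<inter> A)) \<in> measurable M (count_space UNIV) \<and>
        (AE \<omega> in M. finite (N \<omega> \<inter> A)) \<and>
        (\<forall>k::nat. measure M {\<omega>\<in>space M. card (N \<omega> \<inter> A) = k} =
                  enn2real (nu A) ^ k / fact k * exp (- enn2real (nu A)))) \<and>
     (\<forall>(I::nat set) (A::nat \<Rightarrow> 'p set). finite I \<longrightarrow> (\<forall>i\<in>I. A i \<in> sets S \<and> nu (A i) < \<infinity>) \<longrightarrow>
        disjoint_family_on A I \<longrightarrow>
        prob_space.indep_vars M (\<lambda>_. count_space UNIV) (\<lambda>i \<omega>. card (N \<omega> \<inter> A i)) I)"

text \<open>Arrivals by time t (the system starts empty: the intensity vanishes before time 0).\<close>
definition arrived :: "point set \<Rightarrow> real \<Rightarrow> point set" where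
  "arrived P t = {p\<in>P. fst p \<le> t}"

definition num_in_system :: "point set \<Rightarrow> real \<Rightarrow> nat" where
  "num_in_system P t = (\<Sum>(s,b,w)\<in>arrived P t. card {i. i < b \<and> t < s + w i})"

definition departures :: "point set \<Rightarrow> real \<Rightarrow> nat" where
  "departures P t = (\<Sum>(s,b,w)\<in>arrived P t. card {i. i < b \<and> 0 < s + w i \<and> s + w i \<le> t})"

definition workload :: "point set \<Rightarrow> real \<Rightarrow> real" where
  "workload P t = (\<Sum>(s,b,w)\<in>arrived P t. \<Sum>i<b. max 0 (w i - (t - s)))"

end

theory Submission
  imports Defs
begin

lemma poisson_exp_moment:
  fixes X :: "'w \<Rightarrow> nat"
  assumes M: "prob_space M" and X: "X \<in> measurable M (count_space UNIV)"
    and P: "\<And>k. measure M {\<omega>\<in>space M. X \<omega> = k} = l ^ k / fact k * exp (- l)"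
    and l: "0 \<le> l" and c: "0 \<le> c"
  shows "(\<integral>\<omega>. exp (- c * real (X \<omega>)) \<partial>M) = exp (- (l * (1 - exp (- c))))"
proof -
  interpret prob_space M by fact
  have Xm: "(\<lambda>\<omega>. exp (- c * real (X \<omega>))) \<in> borel_measurable M"
    using X by (intro borel_measurable_exp borel_measurable_times borel_measurable_const measurable_compose[OF X]) auto
  have int: "integrable M (\<lambda>\<omega>. exp (- c * real (X \<omega>)))"
    by (rule integrable_const_bound[where B=1]) (use Xm c in auto)
  have sets: "\<And>k. {\<omega>\<in>space M. X \<omega> = k} \<in> sets M"
    using X by (auto intro: measurable_sets_Collect)
  have eq1: "(\<integral>\<^sup>+\<omega>. ennreal (exp (- c * real (X \<omega>))) \<partial>M)
     = (\<integral>\<^sup>+\<omega>. (\<Sum>k. ennreal (exp (- c * real k)) * indicator {\<omega>\<in>space M. X \<omega> = k} \<omega>) \<partial>M)"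
  proof (rule nn_integral_cong)
    fix \<omega> assume w: "\<omega> \<in> space M"
    have "(\<Sum>k. ennreal (exp (- c * real k)) * indicator {\<omega>\<in>space M. X \<omega> = k} \<omega>)
        = (\<Sum>k. if k = X \<omega> then ennreal (exp (- c * real k)) else 0)"
      using w by (intro suminf_cong) (auto simp: indicator_def)
    also have "\<dots> = ennreal (exp (- c * real (X \<omega>)))"
      by (rule sums_unique[symmetric]) (rule sums_single)
    finally show "ennreal (exp (- c * real (X \<omega>))) = (\<Sum>k. ennreal (exp (- c * real k)) * indicator {\<omega>\<in>space M. X \<omega> = k} \<omega>)" by simp
  qed
  also have "\<dots> = (\<Sum>k. \<integral>\<^sup>+\<omega>. ennreal (exp (- c * real k)) * indicator {\<omega>\<in>space M. X \<omega> = k} \<omega> \<partial>M)"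
    by (rule nn_integral_suminf) (use sets in auto)
  also have "\<dots> = (\<Sum>k. ennreal (exp (- l) * ((l * exp (- c)) ^ k /\<^sub>R fact k)))"
  proof (intro suminf_cong)
    fix k
    have "(\<integral>\<^sup>+\<omega>. ennreal (exp (- c * real k)) * indicator {\<omega>\<in>space M. X \<omega> = k} \<omega> \<partial>M)
       = ennreal (exp (- c * real k)) * emeasure M {\<omega>\<in>space M. X \<omega> = k}"
      using sets by (simp add: nn_integral_cmult_indicator)
    also have "\<dots> = ennreal (exp (- c * real k)) * ennreal (l ^ k / fact k * exp (- l))"
      using P[of k] sets by (simp add: emeasure_eq_measure)
    also have "\<dots> = ennreal (exp (- l) * ((l * exp (- c)) ^ k /\<^sub>R fact k))"
    proof -
      have "exp (- c * real k) = exp (- c) ^ k"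
        by (metis exp_of_nat_mult mult.commute)
      then show ?thesis using l
        by (simp add: ennreal_mult'[symmetric] power_mult_distrib field_simps)
    qed
    finally show "(\<integral>\<^sup>+\<omega>. ennreal (exp (- c * real k)) * indicator {\<omega>\<in>space M. X \<omega> = k} \<omega> \<partial>M)
       = ennreal (exp (- l) * ((l * exp (- c)) ^ k /\<^sub>R fact k))" .
  qed
  also have "\<dots> = ennreal (exp (- l) * exp (l * exp (- c)))"
  proof -
    have s: "(\<lambda>k. exp (- l) * ((l * exp (- c)) ^ k /\<^sub>R fact k)) sums (exp (- l) * exp (l * exp (- c)))"
      by (intro sums_mult exp_converges)
    have "(\<Sum>k. ennreal (exp (- l) * ((l * exp (- c)) ^ k /\<^sub>R fact k))) = ennreal (\<Sum>k. exp (- l) * ((l * exp (- c)) ^ k /\<^sub>R fact k))"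
      by (rule suminf_ennreal2) (use l sums_summable[OF s] in auto)
    then show ?thesis using sums_unique[OF s] by simp
  qed
  finally have "ennreal (integral\<^sup>L M (\<lambda>\<omega>. exp (- c * real (X \<omega>)))) = ennreal (exp (- l) * exp (l * exp (- c)))"
    using nn_integral_eq_integral[OF int] by simp
  then have "integral\<^sup>L M (\<lambda>\<omega>. exp (- c * real (X \<omega>))) = exp (- l) * exp (l * exp (- c))"
    by (subst (asm) ennreal_inj) auto
  also have "\<dots> = exp (- (l * (1 - exp (- c))))"
    by (simp add: exp_add[symmetric] algebra_simps)
  finally show ?thesis .
qed

lemma prm_parts:
  assumes "poisson_random_measure M S \<nu> N"
  shows prm_space: "\<And>\<omega>. \<omega>\<in>space M \<Longrightarrow> N \<omega> \<subseteq> space S"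
   and prm_meas: "\<And>A. A\<in>sets S \<Longrightarrow> \<nu> A < \<infinity> \<Longrightarrow> (\<lambda>\<omega>. card (N \<omega> \<inter> A)) \<in> measurable M (count_space UNIV)"
   and prm_fin: "\<And>A. A\<in>sets S \<Longrightarrow> \<nu> A < \<infinity> \<Longrightarrow> (AE \<omega> in M. finite (N \<omega> \<inter> A))"
   and prm_poi: "\<And>A k. A\<in>sets S \<Longrightarrow> \<nu> A < \<infinity> \<Longrightarrow> measure M {\<omega>\<in>space M. card (N \<omega> \<inter> A) = k} =
                  enn2real (\<nu> A) ^ k / fact k * exp (- enn2real (\<nu> A))"
   and prm_indep: "\<And>(I::nat set) (A::nat \<Rightarrow> _ set). finite I \<Longrightarrow> (\<And>i. i\<in>I \<Longrightarrow> A i \<in> sets S \<and> \<nu> (A i) < \<infinity>) \<Longrightarrow>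
        disjoint_family_on A I \<Longrightarrow>
        prob_space.indep_vars M (\<lambda>_. count_space UNIV) (\<lambda>i \<omega>. card (N \<omega> \<inter> A i)) I"
proof -
  note D = assms[unfolded poisson_random_measure_def]
  show "\<And>\<omega>. \<omega>\<in>space M \<Longrightarrow> N \<omega> \<subseteq> space S" using D[THEN conjunct1] by (rule bspec)
  note C3 = D[THEN conjunct2, THEN conjunct2, THEN conjunct1]
  fix A assume a: "A\<in>sets S" "\<nu> A < \<infinity>"
  note C = mp[OF bspec[OF C3 a(1)] a(2)]
  show "(\<lambda>\<omega>. card (N \<omega> \<inter> A)) \<in> measurable M (count_space UNIV)" using C by (rule conjunct1)
  show "AE \<omega> in M. finite (N \<omega> \<inter> A)" using C by (rule conjunct2[THEN conjunct1])
  fix k show "measure M {\<omega>\<in>space M. card (N \<omega> \<inter> A) = k} =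
                  enn2real (\<nu> A) ^ k / fact k * exp (- enn2real (\<nu> A))" using C[THEN conjunct2, THEN conjunct2] by (rule spec)
next
  note D = assms[unfolded poisson_random_measure_def]
  note C4 = D[THEN conjunct2, THEN conjunct2, THEN conjunct2]
  fix I :: "nat set" and A :: "nat \<Rightarrow> _ set"
  assume "finite I" "\<And>i. i\<in>I \<Longrightarrow> A i \<in> sets S \<and> \<nu> (A i) < \<infinity>" "disjoint_family_on A I"
  then show "prob_space.indep_vars M (\<lambda>_. count_space UNIV) (\<lambda>i \<omega>. card (N \<omega> \<inter> A i)) I"
    using C4 by blast
qed

lemma prm_laplace_simple:
  fixes N :: "'w \<Rightarrow> 'p set" and A :: "nat \<Rightarrow> 'p set"
  assumes M: "prob_space M" and PRM: "poisson_random_measure M S \<nu> N" and I: "finite I"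
    and A: "\<And>i. i\<in>I \<Longrightarrow> A i \<in> sets S" "\<And>i. i\<in>I \<Longrightarrow> \<nu> (A i) < \<infinity>"
    and dj: "disjoint_family_on A I" and c: "\<And>i. i\<in>I \<Longrightarrow> 0 \<le> c i"
  shows "(\<integral>\<omega>. exp (- (\<Sum>i\<in>I. c i * real (card (N \<omega> \<inter> A i)))) \<partial>M)
       = exp (- (\<Sum>i\<in>I. enn2real (\<nu> (A i)) * (1 - exp (- c i))))"
proof -
  interpret prob_space M by fact
  have meas: "\<And>i. i\<in>I \<Longrightarrow> (\<lambda>\<omega>. card (N \<omega> \<inter> A i)) \<in> measurable M (count_space UNIV)"
    and P: "\<And>i k. i\<in>I \<Longrightarrow> measure M {\<omega>\<in>space M. card (N \<omega> \<inter> A i) = k} =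
                  enn2real (\<nu> (A i)) ^ k / fact k * exp (- enn2real (\<nu> (A i)))"
    using prm_meas[OF PRM A(1) A(2)] prm_poi[OF PRM A(1) A(2)] by auto
  have ind: "indep_vars (\<lambda>_. count_space UNIV) (\<lambda>i \<omega>. card (N \<omega> \<inter> A i)) I"
    using prm_indep[OF PRM I _ dj] A by blast
  have ind2: "indep_vars (\<lambda>_. borel) (\<lambda>i \<omega>. exp (- c i * real (card (N \<omega> \<inter> A i)))) I"
    by (rule indep_vars_compose2[OF ind]) auto
  have intg: "\<And>i. i\<in>I \<Longrightarrow> integrable M (\<lambda>\<omega>. exp (- c i * real (card (N \<omega> \<inter> A i))))"
  proof (rule integrable_const_bound[where B=1])
    fix i assume i: "i \<in> I"
    have "(\<lambda>\<omega>. real (card (N \<omega> \<inter> A i))) \<in> borel_measurable M"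
      using measurable_compose[OF meas[OF i], of real borel] by simp
    then show "(\<lambda>\<omega>. exp (- c i * real (card (N \<omega> \<inter> A i)))) \<in> borel_measurable M"
      by measurable
    show "AE x in M. norm (exp (- c i * real (card (N x \<inter> A i)))) \<le> 1"
      using c[OF i] by (auto simp: mult_nonneg_nonneg)
  qed
  have "(\<integral>\<omega>. exp (- (\<Sum>i\<in>I. c i * real (card (N \<omega> \<inter> A i)))) \<partial>M)
      = (\<integral>\<omega>. (\<Prod>i\<in>I. exp (- c i * real (card (N \<omega> \<inter> A i)))) \<partial>M)"
    by (simp only: exp_sum[OF I, symmetric] sum_negf[symmetric] mult_minus_left)
  also have "\<dots> = (\<Prod>i\<in>I. \<integral>\<omega>. exp (- c i * real (card (N \<omega> \<inter> A i))) \<partial>M)"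
    by (rule indep_vars_lebesgue_integral[OF I ind2 intg])
  also have "\<dots> = (\<Prod>i\<in>I. exp (- (enn2real (\<nu> (A i)) * (1 - exp (- c i)))))"
    by (intro prod.cong refl poisson_exp_moment[OF M meas P]) (auto intro: c)
  also have "\<dots> = exp (- (\<Sum>i\<in>I. enn2real (\<nu> (A i)) * (1 - exp (- c i))))"
    by (simp only: exp_sum[OF I, symmetric] sum_negf[symmetric])
  finally show ?thesis .
qed


lemma dyadic_tendsto:
  fixes x :: real assumes x: "0 \<le> x"
  shows "(\<lambda>n. real (nat (min (int (n * 2 ^ n)) \<lfloor>2 ^ n * x\<rfloor>)) / 2 ^ n) \<longlonglongrightarrow> x"
proof (rule tendsto_sandwich[where f="\<lambda>n. x - 1 / 2 ^ n" and h="\<lambda>n. x"])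
  have ev: "eventually (\<lambda>n. x \<le> real n) sequentially"
  proof -
    obtain m where m: "x \<le> real m" using real_arch_simple by blast
    show ?thesis using eventually_ge_at_top[of m]
      by eventually_elim (use m in \<open>auto intro: order_trans\<close>)
  qed
  have key: "real (nat (min (int (n * 2 ^ n)) \<lfloor>2 ^ n * x\<rfloor>)) = real_of_int \<lfloor>2 ^ n * x\<rfloor>" if "x \<le> real n" for n :: nat
  proof -
    have "real_of_int \<lfloor>2 ^ n * x\<rfloor> \<le> 2 ^ n * x" by (rule of_int_floor_le)
    also have "\<dots> \<le> 2 ^ n * real n" using that by simp
    finally have "\<lfloor>2 ^ n * x\<rfloor> \<le> int (n * 2 ^ n)"
      by (simp add: mult.commute of_int_le_iff[symmetric, where 'a=real])
    moreover have "0 \<le> \<lfloor>2 ^ n * x\<rfloor>" using x by simp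
    ultimately show ?thesis by simp
  qed
  show "eventually (\<lambda>n. x - 1 / 2 ^ n \<le> real (nat (min (int (n * 2 ^ n)) \<lfloor>2 ^ n * x\<rfloor>)) / 2 ^ n) sequentially"
    using ev
  proof eventually_elim
    case (elim n)
    have "2 ^ n * x - 1 \<le> real_of_int \<lfloor>2 ^ n * x\<rfloor>" by linarith
    then have "(2 ^ n * x - 1) / 2 ^ n \<le> real_of_int \<lfloor>2 ^ n * x\<rfloor> / 2 ^ n"
      by (intro divide_right_mono) auto
    moreover have "(2 ^ n * x - 1) / 2 ^ n = x - 1 / 2 ^ n" by (simp add: diff_divide_distrib)
    ultimately show ?case using key[OF elim] by simp
  qed
  show "eventually (\<lambda>n. real (nat (min (int (n * 2 ^ n)) \<lfloor>2 ^ n * x\<rfloor>)) / 2 ^ n \<le> x) sequentially"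
    using ev
  proof eventually_elim
    case (elim n)
    have "real_of_int \<lfloor>2 ^ n * x\<rfloor> \<le> 2 ^ n * x" by (rule of_int_floor_le)
    then show ?case using key[OF elim] by (simp add: field_simps)
  qed
  show "(\<lambda>n. x - 1 / 2 ^ n) \<longlonglongrightarrow> x"
  proof -
    have "(\<lambda>n. 1 / (2::real) ^ n) \<longlonglongrightarrow> 0"
      by (rule LIMSEQ_divide_realpow_zero) auto
    from tendsto_diff[OF tendsto_const[of x] this] show ?thesis by simp
  qed
qed simp

lemma prm_laplace:
  fixes N :: "'w \<Rightarrow> 'p set" and g :: "'p \<Rightarrow> real"
  assumes M: "prob_space M" and PRM: "poisson_random_measure M S \<nu> N"
    and nuM: "sets nuM = sets S" "\<And>A. A \<in> sets S \<Longrightarrow> emeasure nuM A = \<nu> A"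
    and H: "H \<in> sets S" "\<nu> H < \<infinity>"
    and fin: "\<And>\<omega>. \<omega> \<in> space M \<Longrightarrow> finite (N \<omega> \<inter> H)"
    and g: "g \<in> borel_measurable S" "\<And>p. 0 \<le> g p"
  shows "(\<integral>\<omega>. exp (- (\<Sum>p\<in>N \<omega> \<inter> H. g p)) \<partial>M)
       = exp (- enn2real (\<integral>\<^sup>+ p. indicator H p * ennreal (1 - exp (- g p)) \<partial>nuM))"
proof -
  interpret prob_space M by fact
  define K where "K n p = nat (min (int (n * 2 ^ n)) \<lfloor>2 ^ n * g p\<rfloor>)" for n :: nat and p
  define gn where "gn n p = real (K n p) / 2 ^ n" for n p
  define I where "I n = {..n * 2 ^ n}" for n :: nat
  define A where "A n k = {p \<in> H. K n p = k}" for n k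
  define c where "c n k = real k / 2 ^ n" for n k :: nat
  have Km: "K n \<in> measurable S (count_space UNIV)" for n
    unfolding K_def using g(1) by measurable
  have HS: "H \<subseteq> space S" using H(1) by (rule sets.sets_into_space)
  have As: "A n k \<in> sets S" for n k
  proof -
    have "A n k = (K n -` {k} \<inter> space S) \<inter> H" using HS by (auto simp: A_def)
    then show ?thesis using measurable_sets[OF Km, of "{k}"] H(1) by auto
  qed
  have Afin: "\<nu> (A n k) < \<infinity>" for n k
  proof -
    have "emeasure nuM (A n k) \<le> emeasure nuM H"
      by (rule emeasure_mono) (use H(1) nuM(1) in \<open>auto simp: A_def\<close>)
    then show ?thesis using H(2) nuM(2)[OF As] nuM(2)[OF H(1)] by simp
  qed
  have dj: "disjoint_family_on (A n) (I n)" for n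
    by (auto simp: disjoint_family_on_def A_def)
  have KI: "K n p \<in> I n" for n p
  proof -
    have "nat (min (int (n * 2 ^ n)) \<lfloor>2 ^ n * g p\<rfloor>) \<le> nat (int (n * 2 ^ n))"
      by (rule nat_mono) simp
    then show ?thesis by (simp add: K_def I_def del: of_nat_mult of_nat_power)
  qed
  have dec: "(\<Sum>p\<in>N \<omega> \<inter> H. gn n p) = (\<Sum>k\<in>I n. c n k * real (card (N \<omega> \<inter> A n k)))"
    if w: "\<omega> \<in> space M" for \<omega> n
  proof -
    let ?F = "N \<omega> \<inter> H"
    have fI: "finite (I n)" by (simp add: I_def)
    have "(\<Sum>p\<in>?F. gn n p) = (\<Sum>p\<in>?F. \<Sum>k\<in>I n. if K n p = k then c n k else 0)"
      by (intro sum.cong refl) (simp add: sum.delta'[OF fI] KI gn_def c_def)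
    also have "\<dots> = (\<Sum>k\<in>I n. \<Sum>p\<in>?F. if K n p = k then c n k else 0)"
      by (rule sum.swap)
    also have "\<dots> = (\<Sum>k\<in>I n. c n k * real (card (N \<omega> \<inter> A n k)))"
    proof (intro sum.cong refl)
      fix k
      have "(\<Sum>p\<in>?F. if K n p = k then c n k else 0) = (\<Sum>p\<in>{p\<in>?F. K n p = k}. c n k)"
        by (rule sum.inter_filter[symmetric]) (use fin[OF w] in simp)
      also have "{p\<in>?F. K n p = k} = N \<omega> \<inter> A n k" by (auto simp: A_def)
      finally show "(\<Sum>p\<in>?F. if K n p = k then c n k else 0) = c n k * real (card (N \<omega> \<inter> A n k))"
        by simp
    qed
    finally show ?thesis .
  qed
  have simple: "(\<integral>\<omega>. exp (- (\<Sum>p\<in>N \<omega> \<inter> H. gn n p)) \<partial>M)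
       = exp (- (\<Sum>k\<in>I n. enn2real (\<nu> (A n k)) * (1 - exp (- c n k))))" for n
  proof -
    have "(\<integral>\<omega>. exp (- (\<Sum>p\<in>N \<omega> \<inter> H. gn n p)) \<partial>M)
        = (\<integral>\<omega>. exp (- (\<Sum>k\<in>I n. c n k * real (card (N \<omega> \<inter> A n k)))) \<partial>M)"
      by (rule Bochner_Integration.integral_cong) (simp_all add: dec)
    also have "\<dots> = exp (- (\<Sum>k\<in>I n. enn2real (\<nu> (A n k)) * (1 - exp (- c n k))))"
      by (rule prm_laplace_simple[OF M PRM]) (use Afin in \<open>auto simp: I_def As dj[unfolded I_def] c_def\<close>)
    finally show ?thesis .
  qed
  have rhs_n: "(\<Sum>k\<in>I n. enn2real (\<nu> (A n k)) * (1 - exp (- c n k)))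
      = enn2real (\<integral>\<^sup>+ p. indicator H p * ennreal (1 - exp (- gn n p)) \<partial>nuM)" for n
  proof -
    have "(\<integral>\<^sup>+ p. indicator H p * ennreal (1 - exp (- gn n p)) \<partial>nuM)
        = (\<integral>\<^sup>+ p. (\<Sum>k\<in>I n. ennreal (1 - exp (- c n k)) * indicator (A n k) p) \<partial>nuM)"
    proof (intro nn_integral_cong)
      fix p
      have "(\<Sum>k\<in>I n. ennreal (1 - exp (- c n k)) * indicator (A n k) p)
          = (\<Sum>k\<in>I n. if k = K n p then (if p \<in> H then ennreal (1 - exp (- c n k)) else 0) else 0)"
        by (intro sum.cong refl) (auto simp: A_def indicator_def)
      also have "\<dots> = indicator H p * ennreal (1 - exp (- gn n p))"
        by (simp add: sum.delta[OF finite_atMost[of "n * 2 ^ n"], folded I_def] KI gn_def c_def indicator_def)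
      finally show "indicator H p * ennreal (1 - exp (- gn n p)) = (\<Sum>k\<in>I n. ennreal (1 - exp (- c n k)) * indicator (A n k) p)" ..
    qed
    also have "\<dots> = (\<Sum>k\<in>I n. \<integral>\<^sup>+ p. ennreal (1 - exp (- c n k)) * indicator (A n k) p \<partial>nuM)"
      by (rule nn_integral_sum) (use As nuM(1) in auto)
    also have "\<dots> = (\<Sum>k\<in>I n. ennreal (1 - exp (- c n k)) * \<nu> (A n k))"
      by (intro sum.cong refl) (use As nuM in \<open>simp add: nn_integral_cmult_indicator\<close>)
    finally have "enn2real (\<integral>\<^sup>+ p. indicator H p * ennreal (1 - exp (- gn n p)) \<partial>nuM)
       = (\<Sum>k\<in>I n. enn2real (ennreal (1 - exp (- c n k)) * \<nu> (A n k)))"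
      using Afin by (simp add: enn2real_sum ennreal_mult_less_top)
    also have "\<dots> = (\<Sum>k\<in>I n. enn2real (\<nu> (A n k)) * (1 - exp (- c n k)))"
      by (intro sum.cong refl) (simp add: enn2real_mult c_def)
    finally show ?thesis ..
  qed
  have gn_lim: "(\<lambda>n. gn n p) \<longlonglongrightarrow> g p" for p
    unfolding gn_def K_def by (rule dyadic_tendsto[OF g(2)])
  have gnm: "gn n \<in> borel_measurable S" for n
    unfolding gn_def using Km by measurable
  let ?f = "\<lambda>n \<omega>. exp (- (\<Sum>p\<in>N \<omega> \<inter> H. gn n p))"
  let ?f' = "\<lambda>\<omega>. exp (- (\<Sum>p\<in>N \<omega> \<inter> H. g p))"
  have fm: "?f n \<in> borel_measurable M" for n
  proof -
    have m: "(\<lambda>\<omega>. exp (- (\<Sum>k\<in>I n. c n k * real (card (N \<omega> \<inter> A n k))))) \<in> borel_measurable M"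
    proof -
      have "(\<lambda>\<omega>. real (card (N \<omega> \<inter> A n k))) \<in> borel_measurable M" for k
        using measurable_compose[OF prm_meas[OF PRM As Afin], of real borel] by simp
      then show ?thesis by measurable
    qed
    show ?thesis by (rule measurable_cong[THEN iffD1, OF _ m]) (simp add: dec)
  qed
  have flim: "(\<lambda>n. ?f n \<omega>) \<longlonglongrightarrow> ?f' \<omega>" for \<omega>
    by (intro tendsto_intros gn_lim)
  have f'm: "?f' \<in> borel_measurable M"
    by (rule borel_measurable_LIMSEQ_real[OF flim fm])
  have L: "(\<lambda>n. \<integral>\<omega>. ?f n \<omega> \<partial>M) \<longlonglongrightarrow> (\<integral>\<omega>. ?f' \<omega> \<partial>M)"
  proof (rule integral_dominated_convergence[where w="\<lambda>_. 1"])
    show "AE x in M. norm (?f n x) \<le> 1" for n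
    proof -
      have "0 \<le> (\<Sum>p\<in>N x \<inter> H. gn n p)" for x
        by (intro sum_nonneg) (simp add: gn_def)
      then show ?thesis by simp
    qed
  qed (use f'm fm flim in auto)
  have R: "(\<lambda>n. \<integral>\<^sup>+ p. indicator H p * ennreal (1 - exp (- gn n p)) \<partial>nuM)
       \<longlonglongrightarrow> (\<integral>\<^sup>+ p. indicator H p * ennreal (1 - exp (- g p)) \<partial>nuM)"
  proof (rule nn_integral_dominated_convergence[where w="indicator H"])
    show "(\<lambda>p. indicator H p * ennreal (1 - exp (- gn n p))) \<in> borel_measurable nuM" for n
      unfolding measurable_cong_sets[OF nuM(1) refl] using gnm[of n] H(1) by measurable
    show "(\<lambda>p. indicator H p * ennreal (1 - exp (- g p))) \<in> borel_measurable nuM"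
      unfolding measurable_cong_sets[OF nuM(1) refl] using g(1) H(1) by measurable
    show "indicator H \<in> borel_measurable nuM" using H(1) nuM(1) by simp
    show "AE x in nuM. indicator H x * ennreal (1 - exp (- gn j x)) \<le> indicator H x" for j
      by (auto simp: indicator_def)
    show "(\<integral>\<^sup>+x. indicator H x \<partial>nuM) < \<infinity>"
      using H nuM by simp
    show "AE x in nuM. (\<lambda>i. indicator H x * ennreal (1 - exp (- gn i x))) \<longlonglongrightarrow> indicator H x * ennreal (1 - exp (- g x))"
    proof (rule AE_I2)
      fix x show "(\<lambda>i. indicator H x * ennreal (1 - exp (- gn i x))) \<longlonglongrightarrow> indicator H x * ennreal (1 - exp (- g x))"
        by (cases "x \<in> H") (auto intro!: tendsto_intros gn_lim)
    qed
  qed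
  have R2: "(\<lambda>n. exp (- enn2real (\<integral>\<^sup>+ p. indicator H p * ennreal (1 - exp (- gn n p)) \<partial>nuM)))
     \<longlonglongrightarrow> exp (- enn2real (\<integral>\<^sup>+ p. indicator H p * ennreal (1 - exp (- g p)) \<partial>nuM))"
  proof -
    have fin': "(\<integral>\<^sup>+ p. indicator H p * ennreal (1 - exp (- g p)) \<partial>nuM) < \<infinity>"
    proof -
      have "(\<integral>\<^sup>+ p. indicator H p * ennreal (1 - exp (- g p)) \<partial>nuM) \<le> (\<integral>\<^sup>+ p. indicator H p \<partial>nuM)"
        by (intro nn_integral_mono) (auto simp: indicator_def)
      also have "\<dots> < \<infinity>" using H nuM by simp
      finally show ?thesis .
    qed
    then obtain r where r: "(\<integral>\<^sup>+ p. indicator H p * ennreal (1 - exp (- g p)) \<partial>nuM) = ennreal r" "0 \<le> r"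
      by (auto simp: less_top_ennreal)
    show ?thesis using R unfolding r by (intro tendsto_intros) (use r in auto)
  qed
  have "(\<lambda>n. \<integral>\<omega>. ?f n \<omega> \<partial>M) \<longlonglongrightarrow> exp (- enn2real (\<integral>\<^sup>+ p. indicator H p * ennreal (1 - exp (- g p)) \<partial>nuM))"
    using R2 by (simp add: simple rhs_n)
  with L show ?thesis by (rule LIMSEQ_unique)
qed


lemma pmf_kernel_meas:
  fixes B :: "real \<Rightarrow> nat pmf"
  assumes B_meas: "\<And>n. (\<lambda>s. pmf (B s) n) \<in> borel_measurable borel"
  shows "(\<lambda>s. measure_pmf (B s)) \<in> measurable borel (subprob_algebra (count_space UNIV))"
proof (rule measurable_subprob_algebra)
  fix s show "subprob_space (measure_pmf (B s))" by (rule subprob_space_measure_pmf)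
  show "sets (measure_pmf (B s)) = sets (count_space UNIV)" by simp
next
  fix X :: "nat set" assume X: "X \<in> sets (count_space UNIV)"
  have eq: "emeasure (measure_pmf (B s)) X = (\<Sum>n. ennreal (pmf (B s) n) * indicator X n)" for s
  proof -
    have "emeasure (measure_pmf (B s)) X = (\<integral>\<^sup>+ x. indicator X x \<partial>measure_pmf (B s))" by simp
    also have "\<dots> = (\<integral>\<^sup>+ x. ennreal (pmf (B s) x) * indicator X x \<partial>count_space UNIV)"
      by (rule nn_integral_measure_pmf)
    also have "\<dots> = (\<Sum>n. ennreal (pmf (B s) n) * indicator X n)"
      by (rule nn_integral_count_space_nat)
    finally show ?thesis .
  qed
  have "(\<lambda>s. \<Sum>n. ennreal (pmf (B s) n) * indicator X n) \<in> borel_measurable borel"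
    using B_meas by measurable
  then show "(\<lambda>s. emeasure (measure_pmf (B s)) X) \<in> borel_measurable borel"
    by (simp add: eq)
qed

lemma exp_kernel_nn_meas:
  fixes m :: "real \<Rightarrow> real"
  assumes m: "m \<in> borel_measurable borel" and E: "E \<in> sets borel"
  shows "(\<lambda>s. emeasure (density lborel (exponential_density (m s))) E) \<in> borel_measurable borel"
proof -
  have "(\<lambda>s. \<integral>\<^sup>+ x. ennreal (exponential_density (m s) x) * indicator E x \<partial>lborel) \<in> borel_measurable borel"
    unfolding exponential_density_def using m E by measurable
  then show ?thesis using E by (simp add: emeasure_density)
qed

lemma PiM_kernel_meas:
  fixes m :: "real \<Rightarrow> real"
  assumes m: "m \<in> borel_measurable borel" and mpos: "\<And>s. 0 < m s"
  shows "(\<lambda>s. \<Pi>\<^sub>M i\<in>(UNIV::nat set). density lborel (exponential_density (m s)))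
     \<in> measurable borel (subprob_algebra (\<Pi>\<^sub>M i\<in>(UNIV::nat set). (borel :: real measure)))"
proof (rule measurable_subprob_algebra_generated[where \<Omega>="space (\<Pi>\<^sub>M i\<in>(UNIV::nat set). (borel :: real measure))"
      and G="prod_algebra UNIV (\<lambda>_. borel)"])
  show "sets (\<Pi>\<^sub>M i\<in>(UNIV::nat set). (borel :: real measure)) = sigma_sets (space (\<Pi>\<^sub>M i\<in>(UNIV::nat set). (borel :: real measure))) (prod_algebra UNIV (\<lambda>_. borel))"
    by (simp add: sets_PiM space_PiM)
  show "Int_stable (prod_algebra UNIV (\<lambda>_::nat. borel :: real measure))" by (rule Int_stable_prod_algebra)
  show "prod_algebra UNIV (\<lambda>_::nat. borel :: real measure) \<subseteq> Pow (space (\<Pi>\<^sub>M i\<in>(UNIV::nat set). (borel :: real measure)))"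
    using prod_algebra_sets_into_space by (simp add: space_PiM)
  fix s
  have ps: "prob_space (\<Pi>\<^sub>M i\<in>(UNIV::nat set). density lborel (exponential_density (m s)))"
    by (rule prob_space_PiM) (rule prob_space_exponential_density[OF mpos])
  then show "subprob_space (\<Pi>\<^sub>M i\<in>(UNIV::nat set). density lborel (exponential_density (m s)))"
    by (rule prob_space_imp_subprob_space)
  show "sets (\<Pi>\<^sub>M i\<in>(UNIV::nat set). density lborel (exponential_density (m s))) = sets (\<Pi>\<^sub>M i\<in>(UNIV::nat set). (borel :: real measure))"
    by (rule sets_PiM_cong) auto
next
  fix A assume A: "A \<in> prod_algebra UNIV (\<lambda>_::nat. borel :: real measure)"
  then obtain J E where AJ: "A = prod_emb UNIV (\<lambda>_. borel) J (\<Pi>\<^sub>E j\<in>J. E j)" "finite J"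
      "\<And>i. i \<in> J \<Longrightarrow> E i \<in> sets borel"
    by (rule prod_algebraE) auto
  have eqemb: "prod_emb UNIV (\<lambda>_. borel) J (\<Pi>\<^sub>E j\<in>J. E j) = prod_emb UNIV (\<lambda>_. density lborel (exponential_density (m s))) J (\<Pi>\<^sub>E j\<in>J. E j)" for s
    by (simp add: prod_emb_def)
  have "emeasure (\<Pi>\<^sub>M i\<in>(UNIV::nat set). density lborel (exponential_density (m s))) A
      = (\<Prod>i\<in>J. emeasure (density lborel (exponential_density (m s))) (E i))" for s
    unfolding AJ(1) eqemb[of s]
    by (rule emeasure_PiM_emb) (use AJ prob_space_exponential_density[OF mpos] in auto)
  moreover have "(\<lambda>s. \<Prod>i\<in>J. emeasure (density lborel (exponential_density (m s))) (E i)) \<in> borel_measurable borel"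
    by (intro borel_measurable_prod_ennreal exp_kernel_nn_meas m AJ(3))
  ultimately show "(\<lambda>s. emeasure (\<Pi>\<^sub>M i\<in>(UNIV::nat set). density lborel (exponential_density (m s))) A) \<in> borel_measurable borel"
    by simp
next
  have "emeasure (\<Pi>\<^sub>M i\<in>(UNIV::nat set). density lborel (exponential_density (m s))) (space (\<Pi>\<^sub>M i\<in>(UNIV::nat set). (borel :: real measure))) = 1" for s
  proof -
    have ps: "prob_space (\<Pi>\<^sub>M i\<in>(UNIV::nat set). density lborel (exponential_density (m s)))"
      by (rule prob_space_PiM) (rule prob_space_exponential_density[OF mpos])
    have "space (\<Pi>\<^sub>M i\<in>(UNIV::nat set). (borel :: real measure)) = space (\<Pi>\<^sub>M i\<in>(UNIV::nat set). density lborel (exponential_density (m s)))"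
      by (simp add: space_PiM)
    then show ?thesis using prob_space.emeasure_space_1[OF ps] by simp
  qed
  then show "(\<lambda>s. emeasure (\<Pi>\<^sub>M i\<in>(UNIV::nat set). density lborel (exponential_density (m s))) (space (\<Pi>\<^sub>M i\<in>(UNIV::nat set). (borel :: real measure)))) \<in> borel_measurable borel"
    by simp
qed

lemma mark_kernel_meas:
  fixes m :: "real \<Rightarrow> real" and B :: "real \<Rightarrow> nat pmf"
  assumes B_meas: "\<And>n. (\<lambda>s. pmf (B s) n) \<in> borel_measurable borel"
    and m: "m \<in> borel_measurable borel" and mpos: "\<And>s. 0 < m s"
  shows "mark_law B m \<in> measurable borel (subprob_algebra (count_space UNIV \<Otimes>\<^sub>M (\<Pi>\<^sub>M i\<in>(UNIV::nat set). (borel :: real measure))))"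
proof -
  have "(\<lambda>s. measure_pmf (B s) \<Otimes>\<^sub>M (\<Pi>\<^sub>M i\<in>(UNIV::nat set). density lborel (exponential_density (m s))))
     \<in> measurable borel (subprob_algebra (count_space UNIV \<Otimes>\<^sub>M (\<Pi>\<^sub>M i\<in>(UNIV::nat set). (borel :: real measure))))"
    by (rule measurable_pair_measure[OF pmf_kernel_meas[OF B_meas] PiM_kernel_meas[OF m mpos]])
  then show ?thesis by (simp add: mark_law_def[abs_def])
qed


lemma intensity_measure:
  fixes lam mu :: "real \<Rightarrow> real" and B :: "real \<Rightarrow> nat pmf"
  assumes lam_meas: "lam \<in> borel_measurable borel"
    and B_meas: "\<And>n. (\<lambda>s. pmf (B s) n) \<in> borel_measurable borel"
    and mu_meas: "mu \<in> borel_measurable borel"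
    and mu_pos: "\<And>s. 0 \<le> s \<Longrightarrow> 0 < mu s"
  obtains nuM :: "point measure" where "sets nuM = sets point_space"
    and "\<And>A. A \<in> sets point_space \<Longrightarrow> emeasure nuM A = intensity lam B mu A"
    and "\<And>f. f \<in> borel_measurable point_space \<Longrightarrow> (\<integral>\<^sup>+ p. f p \<partial>nuM)
          = (\<integral>\<^sup>+ s. indicator {0..} s * ennreal (lam s) * (\<integral>\<^sup>+ m. f (s, m) \<partial>mark_law B mu s) \<partial>lborel)"
proof -
  define mu' where "mu' s = (if 0 \<le> s then mu s else 1)" for s
  have mu'm: "mu' \<in> borel_measurable borel" unfolding mu'_def using mu_meas by measurable
  have mu'p: "0 < mu' s" for s using mu_pos by (simp add: mu'_def)
  define MS where "MS = (count_space (UNIV::nat set) \<Otimes>\<^sub>M (\<Pi>\<^sub>M i\<in>(UNIV::nat set). (borel :: real measure)))"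
  have PS: "point_space = borel \<Otimes>\<^sub>M MS" by (simp add: point_space_def MS_def)
  have Km: "mark_law B mu' \<in> measurable borel (subprob_algebra MS)"
    unfolding MS_def by (rule mark_kernel_meas[OF B_meas mu'm mu'p])
  have setsK: "sets (mark_law B mu' s) = sets MS" for s
    using measurable_space[OF Km, of s] by (simp add: space_subprob_algebra)
  define Lk where "Lk s = distr (mark_law B mu' s) point_space (Pair s)" for s
  have Lkm: "Lk \<in> measurable borel (subprob_algebra point_space)"
    unfolding Lk_def
  proof (rule measurable_distr2[where f=Pair])
    show "(\<lambda>(x, y). (x, y)) \<in> borel \<Otimes>\<^sub>M MS \<rightarrow>\<^sub>M point_space" by (simp add: PS)
  qed (rule Km)
  define D where "D = density lborel (\<lambda>s. indicator {0..} s * ennreal (lam s))"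
  define nuM where "nuM = D \<bind> Lk"
  have spD: "space D \<noteq> {}" by (simp add: D_def)
  have LkD: "Lk \<in> measurable D (subprob_algebra point_space)"
    using Lkm by (simp add: D_def measurable_cong_sets[OF sets_density refl])
  have sets_nuM: "sets nuM = sets point_space"
    unfolding nuM_def by (rule sets_bind_measurable[OF LkD spD])
  have Pm: "Pair s \<in> measurable (mark_law B mu' s) point_space" for s
    by (simp add: PS measurable_cong_sets[OF setsK refl])
  have nn: "(\<integral>\<^sup>+ p. f p \<partial>nuM)
          = (\<integral>\<^sup>+ s. indicator {0..} s * ennreal (lam s) * (\<integral>\<^sup>+ m. f (s, m) \<partial>mark_law B mu s) \<partial>lborel)"
    if f: "f \<in> borel_measurable point_space" for f
  proof -
    have "(\<integral>\<^sup>+ p. f p \<partial>nuM) = (\<integral>\<^sup>+ s. \<integral>\<^sup>+ y. f y \<partial>Lk s \<partial>D)"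
      unfolding nuM_def by (rule nn_integral_bind[OF f LkD])
    also have "\<dots> = (\<integral>\<^sup>+ s. indicator {0..} s * ennreal (lam s) * (\<integral>\<^sup>+ y. f y \<partial>Lk s) \<partial>lborel)"
      unfolding D_def
    proof (rule nn_integral_density)
      show "(\<lambda>s. indicator {0..} s * ennreal (lam s)) \<in> borel_measurable lborel"
        using lam_meas by measurable
      show "(\<lambda>s. \<integral>\<^sup>+ y. f y \<partial>Lk s) \<in> borel_measurable lborel"
        using nn_integral_measurable_subprob_algebra[OF f] Lkm
        by (simp add: measurable_lborel2)
    qed
    also have "\<dots> = (\<integral>\<^sup>+ s. indicator {0..} s * ennreal (lam s) * (\<integral>\<^sup>+ m. f (s, m) \<partial>mark_law B mu s) \<partial>lborel)"
    proof (rule nn_integral_cong)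
      fix s :: real
      have "(\<integral>\<^sup>+ y. f y \<partial>Lk s) = (\<integral>\<^sup>+ m. f (s, m) \<partial>mark_law B mu' s)"
        unfolding Lk_def by (rule nn_integral_distr[OF Pm]) (use f in simp)
      then show "indicator {0..} s * ennreal (lam s) * (\<integral>\<^sup>+ y. f y \<partial>Lk s) =
          indicator {0..} s * ennreal (lam s) * (\<integral>\<^sup>+ m. f (s, m) \<partial>mark_law B mu s)"
      proof (cases "0 \<le> s")
        case True
        then have "mark_law B mu' s = mark_law B mu s" by (simp add: mark_law_def mu'_def)
        then show ?thesis using \<open>(\<integral>\<^sup>+ y. f y \<partial>Lk s) = _\<close> by simp
      qed simp
    qed
    finally show ?thesis .
  qed
  show ?thesis
  proof (rule that[of nuM])
    show "sets nuM = sets point_space" by (rule sets_nuM)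
    fix A assume A: "A \<in> sets point_space"
    have "emeasure nuM A = (\<integral>\<^sup>+ p. indicator A p \<partial>nuM)"
      using A sets_nuM by simp
    also have "\<dots> = (\<integral>\<^sup>+ s. indicator {0..} s * ennreal (lam s) * (\<integral>\<^sup>+ m. indicator A (s, m) \<partial>mark_law B mu s) \<partial>lborel)"
      using A by (intro nn) simp
    also have "\<dots> = intensity lam B mu A"
      unfolding intensity_def
    proof (rule nn_integral_cong)
      fix s :: real
      have "(\<integral>\<^sup>+ m. indicator A (s, m) \<partial>mark_law B mu s) = emeasure (mark_law B mu s) (Pair s -` A)"
      proof -
        have "Pair s -` A \<in> sets MS" using A by (simp add: PS)
        moreover have "sets (mark_law B mu s) = sets MS" 
          unfolding mark_law_def MS_def
          by (rule sets_pair_measure_cong) (simp, rule sets_PiM_cong, auto)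
        ultimately have "Pair s -` A \<in> sets (mark_law B mu s)" by simp
        have "(\<integral>\<^sup>+ m. indicator A (s, m) \<partial>mark_law B mu s) = (\<integral>\<^sup>+ m. indicator (Pair s -` A) m \<partial>mark_law B mu s)"
          by (intro nn_integral_cong) (simp add: indicator_def)
        also have "\<dots> = emeasure (mark_law B mu s) (Pair s -` A)"
          by (rule nn_integral_indicator) fact
        finally show ?thesis .
      qed
      then show "indicator {0..} s * ennreal (lam s) * (\<integral>\<^sup>+ m. indicator A (s, m) \<partial>mark_law B mu s) =
         indicator {0..} s * ennreal (lam s) * emeasure (mark_law B mu s) (Pair s -` A)" by simp
    qed
    finally show "emeasure nuM A = intensity lam B mu A" .
  qed (rule nn)
qed


lemma exp_tail:
  assumes m: "0 < m" and c: "0 \<le> c"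
  shows "emeasure (density lborel (exponential_density m)) {c<..} = ennreal (exp (- m * c))"
    and "emeasure (density lborel (exponential_density m)) {..c} = ennreal (1 - exp (- m * c))"
proof -
  interpret D: prob_space "density lborel (exponential_density m)"
    by (rule prob_space_exponential_density[OF m])
  show le: "emeasure (density lborel (exponential_density m)) {..c} = ennreal (1 - exp (- m * c))"
    using m c by (simp add: emeasure_erlang_density erlang_CDF_0)
  have "D.prob {c<..} = D.prob (space (density lborel (exponential_density m)) - {..c})"
    by (intro arg_cong[where f=D.prob]) auto
  also have "\<dots> = 1 - D.prob {..c}" by (rule D.prob_compl) simp
  also have "D.prob {..c} = 1 - exp (- m * c)"
    using le m c by (subst (asm) D.emeasure_eq_measure) (subst (asm) ennreal_inj, auto)
  finally show "emeasure (density lborel (exponential_density m)) {c<..} = ennreal (exp (- m * c))"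
    by (simp add: D.emeasure_eq_measure)
qed

lemma phi_calc:
  fixes s t m \<alpha> \<beta> \<gamma> :: real
  assumes s: "0 \<le> s" "s \<le> t" and m: "0 < m" and \<alpha>: "0 \<le> \<alpha>"
  defines "h \<equiv> \<lambda>x. \<alpha> * max 0 (x - (t - s)) + \<beta> * (if t < s + x then 1 else 0)
                 + \<gamma> * (if 0 < s + x \<and> s + x \<le> t then 1 else 0)"
  shows "(\<integral>\<^sup>+ x. ennreal (exp (- h x)) \<partial>density lborel (exponential_density m))
     = ennreal ((1 - exp (- m * (t - s))) * exp (- \<gamma>) + m / (m + \<alpha>) * exp (- \<beta>) * exp (- m * (t - s)))"
proof -
  define c where "c = t - s"
  have c: "0 \<le> c" using s by (simp add: c_def)
  have m2: "0 < m + \<alpha>" using m \<alpha> by simp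
  define k where "k = exp (- \<beta>) * (m / (m + \<alpha>)) * exp (\<alpha> * c)"
  have k: "0 \<le> k" using m2 m by (simp add: k_def)
  have "(\<integral>\<^sup>+ x. ennreal (exp (- h x)) \<partial>density lborel (exponential_density m))
      = (\<integral>\<^sup>+ x. ennreal (exponential_density m x) * ennreal (exp (- h x)) \<partial>lborel)"
    by (rule nn_integral_density) (auto simp: h_def)
  also have "\<dots> = (\<integral>\<^sup>+ x. ennreal (exp (- \<gamma>)) * (ennreal (exponential_density m x) * indicator {..c} x)
          + ennreal k * (ennreal (exponential_density (m + \<alpha>) x) * indicator {c<..} x) \<partial>lborel)"
  proof (rule nn_integral_cong_AE)
    show "AE x in lborel. ennreal (exponential_density m x) * ennreal (exp (- h x)) =
        ennreal (exp (- \<gamma>)) * (ennreal (exponential_density m x) * indicator {..c} x)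
          + ennreal k * (ennreal (exponential_density (m + \<alpha>) x) * indicator {c<..} x)"
      using AE_lborel_singleton[of 0]
    proof eventually_elim
      case (elim x)
      consider "x < 0" | "0 < x" "x \<le> c" | "c < x" using elim by linarith
      then show ?case
      proof cases
        case 1 then show ?thesis using c by (simp add: exponential_density_def indicator_def)
      next
        case 2
        then have "h x = \<gamma>" using s by (simp add: h_def c_def)
        then show ?thesis using 2 m
          by (simp add: exponential_density_def indicator_def ennreal_mult'[symmetric] mult.commute)
      next
        case 3
        then have hx: "h x = \<alpha> * (x - c) + \<beta>" using s c by (simp add: h_def c_def)
        have ee: "exp (- x * m) * exp (- (\<alpha> * (x - c) + \<beta>)) = exp (- \<beta>) * exp (\<alpha> * c) * exp (- x * (m + \<alpha>))"
        proof -
          have "exp (- x * m) * exp (- (\<alpha> * (x - c) + \<beta>)) = exp (- x * m + - (\<alpha> * (x - c) + \<beta>))"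
            by (rule mult_exp_exp)
          also have "\<dots> = exp (- \<beta> + \<alpha> * c + - x * (m + \<alpha>))"
            by (rule arg_cong[where f=exp]) (simp add: algebra_simps)
          also have "\<dots> = exp (- \<beta>) * exp (\<alpha> * c) * exp (- x * (m + \<alpha>))"
            by (simp only: exp_add)
          finally show ?thesis .
        qed
        have "exponential_density m x * exp (- h x) = m * (exp (- x * m) * exp (- (\<alpha> * (x - c) + \<beta>)))"
          using 3 c unfolding hx exponential_density_def by simp
        also have "\<dots> = k * exponential_density (m + \<alpha>) x"
          using 3 c m2 unfolding ee k_def exponential_density_def by (simp add: field_simps)
        finally have "exponential_density m x * exp (- h x) = k * exponential_density (m + \<alpha>) x" .
        then show ?thesis using 3 c m k
          by (simp add: exponential_density_def indicator_def ennreal_mult'[symmetric])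
      qed
    qed
  qed
  also have "\<dots> = ennreal (exp (- \<gamma>)) * (\<integral>\<^sup>+ x. ennreal (exponential_density m x) * indicator {..c} x \<partial>lborel)
       + ennreal k * (\<integral>\<^sup>+ x. ennreal (exponential_density (m + \<alpha>) x) * indicator {c<..} x \<partial>lborel)"
    by (subst nn_integral_add) (auto simp: nn_integral_cmult)
  also have "(\<integral>\<^sup>+ x. ennreal (exponential_density m x) * indicator {..c} x \<partial>lborel) = ennreal (1 - exp (- m * c))"
    using exp_tail(2)[OF m c] by (simp add: emeasure_density)
  also have "(\<integral>\<^sup>+ x. ennreal (exponential_density (m + \<alpha>) x) * indicator {c<..} x \<partial>lborel) = ennreal (exp (- (m + \<alpha>) * c))"
    using exp_tail(1)[OF m2 c] by (simp add: emeasure_density)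
  also have "ennreal (exp (- \<gamma>)) * ennreal (1 - exp (- m * c)) + ennreal k * ennreal (exp (- (m + \<alpha>) * c))
      = ennreal ((1 - exp (- m * (t - s))) * exp (- \<gamma>) + m / (m + \<alpha>) * exp (- \<beta>) * exp (- m * (t - s)))"
  proof -
    have "k * exp (- (m + \<alpha>) * c) = m / (m + \<alpha>) * exp (- \<beta>) * exp (- m * c)"
    proof -
      have "exp (\<alpha> * c) * exp (- (m + \<alpha>) * c) = exp (\<alpha> * c + - (m + \<alpha>) * c)" by (rule mult_exp_exp)
      also have "\<dots> = exp (- m * c)" by (rule arg_cong[where f=exp]) (simp add: algebra_simps)
      finally have "exp (\<alpha> * c) * exp (- (m + \<alpha>) * c) = exp (- m * c)" .
      then show ?thesis unfolding k_def by (metis (no_types, lifting) mult.assoc mult.commute)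
    qed
    moreover have "0 \<le> 1 - exp (- m * c)" using m c by simp
    moreover have "exp (- (m * (t - s))) \<le> 1" using m c by (simp add: c_def)
    moreover have "0 \<le> m * exp (- \<beta>) * exp (- (m * (t - s))) / (m + \<alpha>)" using m2 m by simp
    ultimately show ?thesis using k
      by (simp add: ennreal_mult'[symmetric] c_def mult.commute del: ennreal_plus)
         (rule ennreal_plus[symmetric], auto)
  qed
  finally show ?thesis .
qed


lemma PiM_prod_integral:
  fixes f :: "real \<Rightarrow> real" and D :: "real measure"
  assumes D: "prob_space D" and f: "f \<in> borel_measurable D" and f0: "\<And>x. 0 \<le> f x" and f1: "\<And>x. f x \<le> 1"
  shows "(\<integral>w. (\<Prod>i<b. f (w i)) \<partial>(\<Pi>\<^sub>M i\<in>(UNIV::nat set). D)) = (\<integral>x. f x \<partial>D) ^ b"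
proof -
  interpret D: prob_space D by fact
  interpret P: product_prob_space "\<lambda>_::nat. D" UNIV
    unfolding product_prob_space_def product_prob_space_axioms_def product_sigma_finite_def
    using D by (simp add: prob_space_imp_sigma_finite)
  let ?J = "{..<b}"
  have intf: "integrable D f"
    by (rule D.integrable_const_bound[where B=1]) (use f f0 f1 in auto)
  have "(\<integral>w. (\<Prod>i<b. f (w i)) \<partial>(\<Pi>\<^sub>M i\<in>(UNIV::nat set). D))
      = (\<integral>w. (\<lambda>y. \<Prod>i\<in>?J. f (y i)) (restrict w ?J) \<partial>(\<Pi>\<^sub>M i\<in>(UNIV::nat set). D))"
    by (intro Bochner_Integration.integral_cong) auto
  also have "\<dots> = (\<integral>y. (\<Prod>i\<in>?J. f (y i)) \<partial>distr (\<Pi>\<^sub>M i\<in>(UNIV::nat set). D) (\<Pi>\<^sub>M i\<in>?J. D) (\<lambda>w. restrict w ?J))"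
  proof (rule integral_distr[symmetric])
    show "(\<lambda>w. restrict w ?J) \<in> (\<Pi>\<^sub>M i\<in>(UNIV::nat set). D) \<rightarrow>\<^sub>M (\<Pi>\<^sub>M i\<in>?J. D)"
      by (rule measurable_restrict_subset) auto
    show "(\<lambda>y. \<Prod>i\<in>?J. f (y i)) \<in> borel_measurable (\<Pi>\<^sub>M i\<in>?J. D)"
      using f by measurable
  qed
  also have "distr (\<Pi>\<^sub>M i\<in>(UNIV::nat set). D) (\<Pi>\<^sub>M i\<in>?J. D) (\<lambda>w. restrict w ?J) = (\<Pi>\<^sub>M i\<in>?J. D)"
    by (rule P.distr_PiM_restrict_finite) auto
  also have "(\<integral>y. (\<Prod>i\<in>?J. f (y i)) \<partial>(\<Pi>\<^sub>M i\<in>?J. D)) = (\<Prod>i\<in>?J. \<integral>x. f x \<partial>D)"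
    by (rule P.product_integral_prod) (auto intro: intf)
  also have "\<dots> = (\<integral>x. f x \<partial>D) ^ b" by simp
  finally show ?thesis .
qed


lemma card_lt_filter: fixes b :: nat shows "real (card {i. i < b \<and> P i}) = (\<Sum>i<b. if P i then 1 else 0)"
proof -
  have "{i. i < b \<and> P i} = {i \<in> {..<b}. P i}" by auto
  then have "real (card {i. i < b \<and> P i}) = (\<Sum>i\<in>{i \<in> {..<b}. P i}. 1)" by simp
  also have "\<dots> = (\<Sum>i<b. if P i then 1 else 0)" by (rule sum.inter_filter) simp
  finally show ?thesis .
qed

lemma G_meas:
  fixes t \<alpha> \<beta> \<gamma> :: real
  shows "(\<lambda>p::point. \<alpha> * (case p of (s, b, w) \<Rightarrow> \<Sum>i<b. max 0 (w i - (t - s)))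
      + \<beta> * real (case p of (s, b, w) \<Rightarrow> card {i. i < b \<and> t < s + w i})
      + \<gamma> * real (case p of (s, b, w) \<Rightarrow> card {i. i < b \<and> 0 < s + w i \<and> s + w i \<le> t}))
    \<in> borel_measurable point_space"
proof -
  let ?F = "\<lambda>b (p::point). \<alpha> * (\<Sum>i<b. max 0 (snd (snd p) i - (t - fst p)))
      + \<beta> * (\<Sum>i<b. if t < fst p + snd (snd p) i then 1 else 0)
      + \<gamma> * (\<Sum>i<b. if 0 < fst p + snd (snd p) i \<and> fst p + snd (snd p) i \<le> t then 1 else 0)"
  have m1: "\<And>b. ?F b \<in> borel_measurable point_space"
    unfolding point_space_def by measurable
  have m2: "(\<lambda>p::point. fst (snd p)) \<in> point_space \<rightarrow>\<^sub>M count_space UNIV"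
    unfolding point_space_def by measurable
  have "(\<lambda>p. ?F (fst (snd p)) p) \<in> borel_measurable point_space"
    by (rule measurable_compose_countable'[OF m1 m2]) simp
  moreover have "?F (fst (snd p)) p = (\<alpha> * (case p of (s, b, w) \<Rightarrow> \<Sum>i<b. max 0 (w i - (t - s)))
      + \<beta> * real (case p of (s, b, w) \<Rightarrow> card {i. i < b \<and> t < s + w i})
      + \<gamma> * real (case p of (s, b, w) \<Rightarrow> card {i. i < b \<and> 0 < s + w i \<and> s + w i \<le> t}))" for p
    by (cases p) (simp add: card_lt_filter)
  ultimately show ?thesis by simp
qed

lemma inner_calc:
  fixes s t \<alpha> \<beta> \<gamma> m :: real and q :: "nat pmf"
  assumes s: "0 \<le> s" "s \<le> t" and m: "0 < m" and \<alpha>: "0 \<le> \<alpha>" and \<beta>: "0 \<le> \<beta>" and \<gamma>: "0 \<le> \<gamma>"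
  defines "G \<equiv> (\<lambda>p::point. \<alpha> * (case p of (s, b, w) \<Rightarrow> \<Sum>i<b. max 0 (w i - (t - s)))
      + \<beta> * real (case p of (s, b, w) \<Rightarrow> card {i. i < b \<and> t < s + w i})
      + \<gamma> * real (case p of (s, b, w) \<Rightarrow> card {i. i < b \<and> 0 < s + w i \<and> s + w i \<le> t}))"
  defines "X \<equiv> (1 - exp (- m * (t - s))) * exp (- \<gamma>) + m / (m + \<alpha>) * exp (- \<beta>) * exp (- m * (t - s))"
  shows "(\<integral>\<^sup>+ bw. ennreal (1 - exp (- G (s, bw))) \<partial>(measure_pmf q \<Otimes>\<^sub>M (\<Pi>\<^sub>M i\<in>(UNIV::nat set). density lborel (exponential_density m))))
       = ennreal (\<integral>b. 1 - X ^ b \<partial>measure_pmf q)"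
proof -
  define D where "D = density lborel (exponential_density m)"
  define PM where "PM = (\<Pi>\<^sub>M i\<in>(UNIV::nat set). D)"
  define h where "h x = \<alpha> * max 0 (x - (t - s)) + \<beta> * (if t < s + x then 1 else 0)
                 + \<gamma> * (if 0 < s + x \<and> s + x \<le> t then 1 else 0)" for x
  have D: "prob_space D" unfolding D_def by (rule prob_space_exponential_density[OF m])
  interpret D: prob_space D by fact
  have PM: "prob_space PM" unfolding PM_def by (rule prob_space_PiM) (rule D)
  interpret PM: prob_space PM by fact
  have h0: "0 \<le> h x" for x using \<alpha> \<beta> \<gamma> by (simp add: h_def)
  have hm: "h \<in> borel_measurable D" unfolding h_def D_def by measurable
  have Gsum: "G (s, b, w) = (\<Sum>i<b. h (w i))" for b w
    by (simp add: G_def h_def card_lt_filter sum.distrib sum_distrib_left)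
  have X0: "0 \<le> X" and X1: "X \<le> 1" and phi: "(\<integral>x. exp (- h x) \<partial>D) = X"
  proof -
    have nn: "(\<integral>\<^sup>+ x. ennreal (exp (- h x)) \<partial>D) = ennreal X"
      unfolding D_def X_def h_def by (rule phi_calc[OF s m \<alpha>])
    have "(\<integral>x. exp (- h x) \<partial>D) = enn2real (\<integral>\<^sup>+ x. ennreal (exp (- h x)) \<partial>D)"
      by (rule integral_eq_nn_integral) (use hm in auto)
    also have "X \<ge> 0" unfolding X_def using m \<alpha> s
      by (intro add_nonneg_nonneg mult_nonneg_nonneg) auto
    then have "enn2real (\<integral>\<^sup>+ x. ennreal (exp (- h x)) \<partial>D) = X" using nn by simp
    finally show phi: "(\<integral>x. exp (- h x) \<partial>D) = X" .
    show "0 \<le> X" by fact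
    have "(\<integral>x. exp (- h x) \<partial>D) \<le> (\<integral>x. 1 \<partial>D)"
      by (rule integral_mono) (use hm h0 in \<open>auto intro!: D.integrable_const_bound[where B=1]\<close>)
    then show "X \<le> 1" using phi by (simp add: D.prob_space)
  qed
  have Gm: "(\<lambda>bw. ennreal (1 - exp (- G (s, bw)))) \<in> borel_measurable (measure_pmf q \<Otimes>\<^sub>M PM)"
  proof -
    have Gm0: "G \<in> borel_measurable (borel \<Otimes>\<^sub>M (count_space UNIV \<Otimes>\<^sub>M (\<Pi>\<^sub>M i\<in>(UNIV::nat set). (borel :: real measure))))"
      using G_meas unfolding G_def point_space_def .
    have Pm: "Pair s \<in> measurable (count_space UNIV \<Otimes>\<^sub>M (\<Pi>\<^sub>M i\<in>(UNIV::nat set). (borel :: real measure))) (borel \<Otimes>\<^sub>M (count_space UNIV \<Otimes>\<^sub>M (\<Pi>\<^sub>M i\<in>(UNIV::nat set). (borel :: real measure))))"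
      by (rule measurable_Pair1') simp
    have Gs: "(\<lambda>bw. G (s, bw)) \<in> borel_measurable (count_space UNIV \<Otimes>\<^sub>M (\<Pi>\<^sub>M i\<in>(UNIV::nat set). (borel :: real measure)))"
      by (rule measurable_compose[OF Pm Gm0])
    have se: "sets (measure_pmf q \<Otimes>\<^sub>M PM) = sets (count_space UNIV \<Otimes>\<^sub>M (\<Pi>\<^sub>M i\<in>(UNIV::nat set). (borel :: real measure)))"
      unfolding PM_def D_def by (rule sets_pair_measure_cong) (simp, rule sets_PiM_cong, auto)
    show ?thesis unfolding measurable_cong_sets[OF se refl] using Gs by measurable
  qed
  have inner: "(\<integral>\<^sup>+ w. ennreal (1 - exp (- G (s, b, w))) \<partial>PM) = ennreal (1 - X ^ b)" for b
  proof -
    have pm: "(\<lambda>w. \<Prod>i<b. exp (- h (w i))) \<in> borel_measurable PM"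
      unfolding PM_def using hm by measurable
    have int: "integrable PM (\<lambda>w. \<Prod>i<b. exp (- h (w i)))"
      by (rule PM.integrable_const_bound[where B=1]) (use pm h0 in \<open>auto intro!: prod_le_1 simp: abs_prod\<close>)
    have eq: "exp (- G (s, b, w)) = (\<Prod>i<b. exp (- h (w i)))" for w
      by (simp add: Gsum exp_sum[symmetric] sum_negf)
    have "(\<integral>\<^sup>+ w. ennreal (1 - exp (- G (s, b, w))) \<partial>PM) = (\<integral>\<^sup>+ w. ennreal (1 - (\<Prod>i<b. exp (- h (w i)))) \<partial>PM)"
      by (simp add: eq)
    also have "\<dots> = ennreal (\<integral>w. 1 - (\<Prod>i<b. exp (- h (w i))) \<partial>PM)"
    proof (rule nn_integral_eq_integral)
      show "integrable PM (\<lambda>w. 1 - (\<Prod>i<b. exp (- h (w i))))" using int by simp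
      show "AE x in PM. 0 \<le> 1 - (\<Prod>i<b. exp (- h (x i)))"
        using h0 by (auto intro!: prod_le_1)
    qed
    also have "(\<integral>w. 1 - (\<Prod>i<b. exp (- h (w i))) \<partial>PM) = 1 - (\<integral>w. (\<Prod>i<b. exp (- h (w i))) \<partial>PM)"
      using int by (simp add: PM.prob_space)
    also have "(\<integral>w. (\<Prod>i<b. exp (- h (w i))) \<partial>PM) = (\<integral>x. exp (- h x) \<partial>D) ^ b"
      unfolding PM_def by (rule PiM_prod_integral[OF D]) (use hm h0 in auto)
    finally show ?thesis using phi by simp
  qed
  have "(\<integral>\<^sup>+ bw. ennreal (1 - exp (- G (s, bw))) \<partial>(measure_pmf q \<Otimes>\<^sub>M PM))
      = (\<integral>\<^sup>+ b. \<integral>\<^sup>+ w. ennreal (1 - exp (- G (s, b, w))) \<partial>PM \<partial>measure_pmf q)"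
    by (rule PM.nn_integral_fst[symmetric, OF Gm, simplified])
  also have "\<dots> = (\<integral>\<^sup>+ b. ennreal (1 - X ^ b) \<partial>measure_pmf q)"
    by (simp add: inner)
  also have "\<dots> = ennreal (\<integral>b. 1 - X ^ b \<partial>measure_pmf q)"
  proof (rule nn_integral_eq_integral)
    show "integrable (measure_pmf q) (\<lambda>b. 1 - X ^ b)"
      by (rule measure_pmf.integrable_const_bound[where B=1]) (use X0 X1 in \<open>auto simp: power_le_one\<close>)
    show "AE b in measure_pmf q. 0 \<le> 1 - X ^ b"
      using X0 X1 by (auto simp: power_le_one)
  qed
  finally show ?thesis unfolding PM_def D_def .
qed


lemma X_bounds:
  fixes s t \<alpha> \<beta> \<gamma> m :: real
  assumes s: "s \<le> t" and m: "0 < m" and \<alpha>: "0 \<le> \<alpha>" and \<beta>: "0 \<le> \<beta>" and \<gamma>: "0 \<le> \<gamma>"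
  shows "0 \<le> (1 - exp (- m * (t - s))) * exp (- \<gamma>) + m / (m + \<alpha>) * exp (- \<beta>) * exp (- m * (t - s))"
    and "(1 - exp (- m * (t - s))) * exp (- \<gamma>) + m / (m + \<alpha>) * exp (- \<beta>) * exp (- m * (t - s)) \<le> 1"
proof -
  define e where "e = exp (- m * (t - s))"
  have e1: "e \<le> 1" using s m by (simp add: e_def mult_nonneg_nonneg)
  have e0: "0 < e" by (simp add: e_def)
  have q: "0 \<le> m / (m + \<alpha>)" "m / (m + \<alpha>) \<le> 1" using m \<alpha> by auto
  have a: "(1 - e) * exp (- \<gamma>) \<le> 1 - e" by (rule mult_left_le) (use \<gamma> e1 in auto)
  have "m / (m + \<alpha>) * exp (- \<beta>) \<le> 1" by (rule mult_le_one) (use q \<beta> in auto)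
  then have "m / (m + \<alpha>) * exp (- \<beta>) * e \<le> 1 * e" by (rule mult_right_mono) (use e0 in simp)
  then have b: "m / (m + \<alpha>) * exp (- \<beta>) * e \<le> e" by simp
  have "0 \<le> (1 - e) * exp (- \<gamma>) + m / (m + \<alpha>) * exp (- \<beta>) * e"
    using e1 e0 q by (intro add_nonneg_nonneg mult_nonneg_nonneg) auto
  then show "0 \<le> (1 - exp (- m * (t - s))) * exp (- \<gamma>) + m / (m + \<alpha>) * exp (- \<beta>) * exp (- m * (t - s))"
    unfolding e_def .
  have "(1 - e) * exp (- \<gamma>) + m / (m + \<alpha>) * exp (- \<beta>) * e \<le> 1"
    using a b by simp
  then show "(1 - exp (- m * (t - s))) * exp (- \<gamma>) + m / (m + \<alpha>) * exp (- \<beta>) * exp (- m * (t - s)) \<le> 1"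
    unfolding e_def .
qed

theorem corollary2:
  fixes M :: "'w measure" and P :: "'w \<Rightarrow> point set"
    and lam mu :: "real \<Rightarrow> real" and B :: "real \<Rightarrow> nat pmf"
    and t \<alpha> \<beta> \<gamma> :: real
  assumes "prob_space M"
    and lam_nonneg: "\<And>s. 0 \<le> s \<Longrightarrow> 0 \<le> lam s"
    and lam_meas: "lam \<in> borel_measurable borel"
    and lam_loc_int: "\<And>T. set_integrable lborel {0..T} lam"
    and B_meas: "\<And>n. (\<lambda>s. pmf (B s) n) \<in> borel_measurable borel"
    and B_pos: "\<And>s. 0 \<le> s \<Longrightarrow> 0 \<notin> set_pmf (B s)"
    and mu_meas: "mu \<in> borel_measurable borel"
    and mu_pos: "\<And>s. 0 \<le> s \<Longrightarrow> 0 < mu s"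
    and locally_finite: "\<And>\<omega> T. \<omega> \<in> space M \<Longrightarrow> finite (arrived (P \<omega>) T)"
    and PRM: "poisson_random_measure M point_space (intensity lam B mu) P"
    and "0 \<le> t" "0 \<le> \<alpha>" "0 \<le> \<beta>" "0 \<le> \<gamma>"
  shows "(\<integral>\<omega>. exp (- \<alpha> * workload (P \<omega>) t - \<beta> * real (num_in_system (P \<omega>) t)
                     - \<gamma> * real (departures (P \<omega>) t)) \<partial>M)
       = exp (- (LINT s:{0..t}|lborel.
            (\<integral>b. 1 - ((1 - exp (- mu s * (t - s))) * exp (- \<gamma>)
                        + mu s / (mu s + \<alpha>) * exp (- \<beta>) * exp (- mu s * (t - s))) ^ b
              \<partial>measure_pmf (B s)) * lam s))"
proof -
  note M = assms(1)
  note t = assms(11) and \<alpha> = assms(12) and \<beta> = assms(13) and \<gamma> = assms(14)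
  interpret prob_space M by (rule M)
  define G where "G = (\<lambda>p::point. \<alpha> * (case p of (s, b, w) \<Rightarrow> \<Sum>i<b. max 0 (w i - (t - s)))
      + \<beta> * real (case p of (s, b, w) \<Rightarrow> card {i. i < b \<and> t < s + w i})
      + \<gamma> * real (case p of (s, b, w) \<Rightarrow> card {i. i < b \<and> 0 < s + w i \<and> s + w i \<le> t}))"
  define H where "H = {p::point. fst p \<le> t}"
  define X where "X s = (1 - exp (- mu s * (t - s))) * exp (- \<gamma>) + mu s / (mu s + \<alpha>) * exp (- \<beta>) * exp (- mu s * (t - s))" for s
  define E where "E s = (\<integral>b. 1 - X s ^ b \<partial>measure_pmf (B s))" for s
  obtain nuM :: "point measure" where nuM1: "sets nuM = sets point_space"
    and nuM2: "\<And>A. A \<in> sets point_space \<Longrightarrow> emeasure nuM A = intensity lam B mu A"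
    and nuM3: "\<And>f. f \<in> borel_measurable point_space \<Longrightarrow> (\<integral>\<^sup>+ p. f p \<partial>nuM)
          = (\<integral>\<^sup>+ s. indicator {0..} s * ennreal (lam s) * (\<integral>\<^sup>+ m. f (s, m) \<partial>mark_law B mu s) \<partial>lborel)"
    using intensity_measure[OF lam_meas B_meas mu_meas mu_pos] by blast
  have Gm: "G \<in> borel_measurable point_space" unfolding G_def by (rule G_meas)
  have G0: "0 \<le> G p" for p
    using \<alpha> \<beta> \<gamma> by (cases p) (auto simp: G_def intro!: add_nonneg_nonneg mult_nonneg_nonneg sum_nonneg)
  have spPS: "space point_space = UNIV" by (simp add: point_space_def space_pair_measure space_PiM)
  have Hs: "H \<in> sets point_space"
  proof -
    have "{p \<in> space point_space. fst p \<le> t} \<in> sets point_space"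
      unfolding point_space_def by measurable
    then show ?thesis by (simp add: spPS H_def)
  qed
  have fin: "finite (P \<omega> \<inter> H)" if "\<omega> \<in> space M" for \<omega>
  proof -
    have "P \<omega> \<inter> H = arrived (P \<omega>) t" by (auto simp: arrived_def H_def)
    then show ?thesis using locally_finite[OF that] by simp
  qed
  have probK: "prob_space (mark_law B mu s)" if "0 \<le> s" for s
    unfolding mark_law_def
    by (intro prob_space_pair prob_space_measure_pmf prob_space_PiM prob_space_exponential_density mu_pos that)
  have setsK: "sets (mark_law B m s) = sets (count_space UNIV \<Otimes>\<^sub>M (\<Pi>\<^sub>M i\<in>(UNIV::nat set). (borel :: real measure)))" for m s
    unfolding mark_law_def by (rule sets_pair_measure_cong) (simp, rule sets_PiM_cong, auto)
  have int_t: "integrable lborel (\<lambda>x. indicator {0..t} x *\<^sub>R lam x)"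
    using lam_loc_int[of t] by (simp add: set_integrable_def)
  have Hfin: "intensity lam B mu H < \<infinity>"
  proof -
    have "intensity lam B mu H = (\<integral>\<^sup>+ p. indicator H p \<partial>nuM)"
      using Hs nuM1 nuM2[OF Hs] by simp
    also have "\<dots> = (\<integral>\<^sup>+ s. indicator {0..} s * ennreal (lam s) * (\<integral>\<^sup>+ m. indicator H (s, m) \<partial>mark_law B mu s) \<partial>lborel)"
      by (rule nuM3) (use Hs in simp)
    also have "\<dots> \<le> (\<integral>\<^sup>+ s. ennreal (norm (indicator {0..t} s *\<^sub>R lam s)) \<partial>lborel)"
    proof (rule nn_integral_mono)
      fix s :: real
      show "indicator {0..} s * ennreal (lam s) * (\<integral>\<^sup>+ m. indicator H (s, m) \<partial>mark_law B mu s)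
          \<le> ennreal (norm (indicator {0..t} s *\<^sub>R lam s))"
      proof (cases "0 \<le> s \<and> s \<le> t")
        case True
        interpret K: prob_space "mark_law B mu s" using probK True by blast
        have "(\<integral>\<^sup>+ m. indicator H (s, m) \<partial>mark_law B mu s) = (\<integral>\<^sup>+ m. 1 \<partial>mark_law B mu s)"
          using True by (intro nn_integral_cong) (simp add: H_def)
        also have "\<dots> = 1" by (simp add: K.emeasure_space_1)
        finally show ?thesis using True lam_nonneg[of s] by (simp add: indicator_def)
      next
        case False
        then consider "s < 0" | "t < s" by linarith
        then show ?thesis
        proof cases
          case 2
          then have "(\<integral>\<^sup>+ m. indicator H (s, m) \<partial>mark_law B mu s) = 0"
            by (simp add: H_def)
          then show ?thesis by simp
        qed (simp add: indicator_def)
      qed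
    qed
    also have "\<dots> < \<infinity>" using int_t unfolding integrable_iff_bounded by (simp only:)
    finally show ?thesis .
  qed
  have inner: "(\<integral>\<^sup>+ m. indicator H (s, m) * ennreal (1 - exp (- G (s, m))) \<partial>mark_law B mu s) = ennreal (E s)"
    if s: "0 \<le> s" "s \<le> t" for s
  proof -
    have "(\<integral>\<^sup>+ m. indicator H (s, m) * ennreal (1 - exp (- G (s, m))) \<partial>mark_law B mu s)
        = (\<integral>\<^sup>+ m. ennreal (1 - exp (- G (s, m))) \<partial>mark_law B mu s)"
      using s by (intro nn_integral_cong) (simp add: H_def)
    also have "\<dots> = ennreal (E s)"
      unfolding mark_law_def E_def X_def G_def
      by (rule inner_calc[OF s mu_pos[OF s(1)] \<alpha> \<beta> \<gamma>])
    finally show ?thesis .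
  qed
  have E0: "0 \<le> E s" if "s \<le> t" "0 \<le> s" for s
  proof -
    note XB = X_bounds[OF that(1) mu_pos[OF that(2)] \<alpha> \<beta> \<gamma>]
    show ?thesis unfolding E_def
      by (rule integral_nonneg_AE) (use XB in \<open>auto simp: X_def power_le_one\<close>)
  qed
  have expo: "(\<integral>\<^sup>+ p. indicator H p * ennreal (1 - exp (- G p)) \<partial>nuM)
      = (\<integral>\<^sup>+ s. ennreal (indicator {0..t} s *\<^sub>R (E s * lam s)) \<partial>lborel)"
  proof -
    have fm: "(\<lambda>p. indicator H p * ennreal (1 - exp (- G p))) \<in> borel_measurable point_space"
      using Gm Hs by measurable
    have "(\<integral>\<^sup>+ p. indicator H p * ennreal (1 - exp (- G p)) \<partial>nuM)
       = (\<integral>\<^sup>+ s. indicator {0..} s * ennreal (lam s) * (\<integral>\<^sup>+ m. indicator H (s, m) * ennreal (1 - exp (- G (s, m))) \<partial>mark_law B mu s) \<partial>lborel)"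
      by (rule nuM3[OF fm])
    also have "\<dots> = (\<integral>\<^sup>+ s. ennreal (indicator {0..t} s *\<^sub>R (E s * lam s)) \<partial>lborel)"
    proof (rule nn_integral_cong)
      fix s :: real
      consider "s < 0" | "0 \<le> s" "s \<le> t" | "t < s" by linarith
      then show "indicator {0..} s * ennreal (lam s) * (\<integral>\<^sup>+ m. indicator H (s, m) * ennreal (1 - exp (- G (s, m))) \<partial>mark_law B mu s)
          = ennreal (indicator {0..t} s *\<^sub>R (E s * lam s))"
      proof cases
        case 2
        then show ?thesis using inner[OF 2] E0[of s] lam_nonneg[of s]
          by (simp add: indicator_def ennreal_mult'[symmetric] mult.commute)
      next
        case 3
        then have "(\<integral>\<^sup>+ m. indicator H (s, m) * ennreal (1 - exp (- G (s, m))) \<partial>mark_law B mu s) = 0"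
          by (simp add: H_def)
        then show ?thesis using 3 by simp
      qed (simp add: indicator_def)
    qed
    finally show ?thesis .
  qed
  have Fm: "(\<lambda>s. indicator {0..t} s *\<^sub>R (E s * lam s)) \<in> borel_measurable lborel"
  proof -
    define mu' where "mu' s = (if 0 \<le> s then mu s else 1)" for s
    have mu'm: "mu' \<in> borel_measurable borel" unfolding mu'_def using mu_meas by measurable
    have mu'p: "0 < mu' s" for s using mu_pos by (simp add: mu'_def)
    have Km: "mark_law B mu' \<in> measurable borel (subprob_algebra (count_space UNIV \<Otimes>\<^sub>M (\<Pi>\<^sub>M i\<in>(UNIV::nat set). (borel :: real measure))))"
      by (rule mark_kernel_meas[OF B_meas mu'm mu'p])
    have f2: "(\<lambda>(s, m). indicator H (s, m) * ennreal (1 - exp (- G (s, m)))) \<in> borel_measurable (borel \<Otimes>\<^sub>M (count_space UNIV \<Otimes>\<^sub>M (\<Pi>\<^sub>M i\<in>(UNIV::nat set). (borel :: real measure))))"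
    proof -
      have "(\<lambda>p. indicator H p * ennreal (1 - exp (- G p))) \<in> borel_measurable point_space"
        using Gm Hs by measurable
      then show ?thesis by (simp add: point_space_def split_beta')
    qed
    have Phim: "(\<lambda>s. \<integral>\<^sup>+ m. indicator H (s, m) * ennreal (1 - exp (- G (s, m))) \<partial>mark_law B mu' s) \<in> borel_measurable borel"
      by (rule nn_integral_measurable_subprob_algebra2[OF f2 Km])
    have mm: "(\<lambda>s. indicator {0..t} s *\<^sub>R (enn2real (\<integral>\<^sup>+ m. indicator H (s, m) * ennreal (1 - exp (- G (s, m))) \<partial>mark_law B mu' s) * lam s)) \<in> borel_measurable borel"
      using Phim lam_meas by measurable
    have eq: "indicator {0..t} s *\<^sub>R (enn2real (\<integral>\<^sup>+ m. indicator H (s, m) * ennreal (1 - exp (- G (s, m))) \<partial>mark_law B mu' s) * lam s)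
        = indicator {0..t} s *\<^sub>R (E s * lam s)" for s
    proof (cases "0 \<le> s \<and> s \<le> t")
      case True
      then have "mark_law B mu' s = mark_law B mu s" by (simp add: mark_law_def mu'_def)
      then show ?thesis using True inner[of s] E0[of s] by simp
    qed (auto simp: indicator_def)
    have "(\<lambda>s. indicator {0..t} s *\<^sub>R (enn2real (\<integral>\<^sup>+ m. indicator H (s, m) * ennreal (1 - exp (- G (s, m))) \<partial>mark_law B mu' s) * lam s))
        = (\<lambda>s. indicator {0..t} s *\<^sub>R (E s * lam s))"
      by (rule ext) (rule eq)
    with mm show ?thesis by simp
  qed
  have Fnn: "AE s in lborel. 0 \<le> indicator {0..t} s *\<^sub>R (E s * lam s)"
    using E0 lam_nonneg by (auto simp: indicator_def intro!: mult_nonneg_nonneg)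
  have lhs: "exp (- \<alpha> * workload (P \<omega>) t - \<beta> * real (num_in_system (P \<omega>) t) - \<gamma> * real (departures (P \<omega>) t))
      = exp (- (\<Sum>p\<in>P \<omega> \<inter> H. G p))" for \<omega>
  proof -
    have ar: "arrived (P \<omega>) t = P \<omega> \<inter> H" by (auto simp: arrived_def H_def)
    have "(\<Sum>p\<in>P \<omega> \<inter> H. G p) = \<alpha> * workload (P \<omega>) t + \<beta> * real (num_in_system (P \<omega>) t) + \<gamma> * real (departures (P \<omega>) t)"
      unfolding workload_def num_in_system_def departures_def ar G_def
      by (simp add: sum.distrib sum_distrib_left)
    then show ?thesis by simp
  qed
  have "(\<integral>\<omega>. exp (- \<alpha> * workload (P \<omega>) t - \<beta> * real (num_in_system (P \<omega>) t)
                     - \<gamma> * real (departures (P \<omega>) t)) \<partial>M)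
      = (\<integral>\<omega>. exp (- (\<Sum>p\<in>P \<omega> \<inter> H. G p)) \<partial>M)"
    by (simp only: lhs)
  also have "\<dots> = exp (- enn2real (\<integral>\<^sup>+ p. indicator H p * ennreal (1 - exp (- G p)) \<partial>nuM))"
    by (rule prm_laplace[OF M PRM nuM1 nuM2 Hs Hfin fin Gm G0])
  also have "enn2real (\<integral>\<^sup>+ p. indicator H p * ennreal (1 - exp (- G p)) \<partial>nuM)
      = (LINT s:{0..t}|lborel. E s * lam s)"
    unfolding expo set_lebesgue_integral_def
    by (rule integral_eq_nn_integral[OF Fm Fnn, symmetric])
  finally show ?thesis by (simp add: E_def X_def)
qed


end
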